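(* Let $K$ be an algebraically closed field of characteristic zero and $g\ge 3$. Then $$\alpha(F_{g,3})=\dim Z(F_{g,3})+\binom{g}{2}=\chi(F_{g,3})+g=\frac{2g^3+3g^2-5g}{6}.$$
   Context: For a finite-dimensional Lie algebra $\mathfrak{h}$, $\alpha(\mathfrak{h})$ is the maximal dimension of an abelian subalgebra, $Z(\mathfrak{h})$ is the center, and the index is $\chi(\mathfrak{h})=\min_{\ell\in\mathfrak{h}^*}\dim\mathfrak{h}(\ell)$ where $\mathfrak{h}(\ell)=\{y\in\mathfrak{h}\mid \ell([x,y])=0\ \forall x\in\mathfrak{h}\}$. Lower central series: $\mathfrak{h}^1=\mathfrak{h}$, $\mathfrak{h}^{k+1}=[\mathfrak{h},\mathfrak{h}^k]$. $F_{g,c}:=F_g/F_g^{c+1}$ where $F_g$ is the free Lie algebra on $g$ generators. *)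

theory Defs
  imports "HOL-Library.Function_Algebras" "HOL-Computational_Algebra.Polynomial"
begin

definition lie_dim :: "('k::field \<Rightarrow> 'v::ab_group_add \<Rightarrow> 'v) \<Rightarrow> 'v set \<Rightarrow> nat" where
  "lie_dim sc L = vector_space.dim sc L"

definition lie_alpha :: "('k::field \<Rightarrow> 'v::ab_group_add \<Rightarrow> 'v) \<Rightarrow> 'v set \<Rightarrow> ('v \<Rightarrow> 'v \<Rightarrow> 'v) \<Rightarrow> nat" where
  "lie_alpha sc L br = Sup {vector_space.dim sc A | A.
      module.subspace sc A \<and> A \<subseteq> L \<and> (\<forall>x\<in>A. \<forall>y\<in>A. br x y \<in> A) \<and>
      (\<forall>x\<in>A. \<forall>y\<in>A. br x y = 0)}"

definition lie_center :: "'v::zero set \<Rightarrow> ('v \<Rightarrow> 'v \<Rightarrow> 'v) \<Rightarrow> 'v set" where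
  "lie_center L br = {z \<in> L. \<forall>x\<in>L. br x z = 0}"

definition lie_stab :: "'v set \<Rightarrow> ('v \<Rightarrow> 'v \<Rightarrow> 'v) \<Rightarrow> ('v \<Rightarrow> 'k::field) \<Rightarrow> 'v set" where
  "lie_stab L br l = {y \<in> L. \<forall>x\<in>L. l (br x y) = 0}"

text \<open>Index: minimum of dim h(l) over linear functionals l (every functional on L
  extends to a linear functional on the ambient space).\<close>
definition lie_index :: "('k::field \<Rightarrow> 'v::ab_group_add \<Rightarrow> 'v) \<Rightarrow> 'v set \<Rightarrow> ('v \<Rightarrow> 'v \<Rightarrow> 'v) \<Rightarrow> nat" where
  "lie_index sc L br = Inf {vector_space.dim sc (lie_stab L br l) | l.
      Vector_Spaces.linear sc ((*) :: 'k \<Rightarrow> 'k \<Rightarrow> 'k) l}"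

text \<open>Ambient space: K-valued functions on words (nat lists) = (completed) free associative
  algebra on letters 0,1,2,...  Elements of the truncated algebra K<X_0..X_{g-1}>/(words of length > c).\<close>

definition wscale :: "'k::field \<Rightarrow> (nat list \<Rightarrow> 'k) \<Rightarrow> (nat list \<Rightarrow> 'k)" where
  "wscale a f = (\<lambda>w. a * f w)"

definition tmult :: "nat \<Rightarrow> (nat list \<Rightarrow> 'k::field) \<Rightarrow> (nat list \<Rightarrow> 'k) \<Rightarrow> (nat list \<Rightarrow> 'k)" where
  "tmult c f h = (\<lambda>w. if length w \<le> c then (\<Sum>i\<le>length w. f (take i w) * h (drop i w)) else 0)"

definition tbracket :: "nat \<Rightarrow> (nat list \<Rightarrow> 'k::field) \<Rightarrow> (nat list \<Rightarrow> 'k) \<Rightarrow> (nat list \<Rightarrow> 'k)" where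
  "tbracket c f h = tmult c f h - tmult c h f"

definition gen :: "nat \<Rightarrow> (nat list \<Rightarrow> 'k::field)" where
  "gen i = (\<lambda>w. if w = [i] then 1 else 0)"

text \<open>F_{g,c} = F_g / F_g^{c+1}, realized as the Lie subalgebra generated by X_0,...,X_{g-1}
  in the truncated free associative algebra.\<close>
definition free_nilp :: "nat \<Rightarrow> nat \<Rightarrow> (nat list \<Rightarrow> 'k::field) set" where
  "free_nilp g c = \<Inter>{S. module.subspace wscale S \<and> gen ` {..<g} \<subseteq> S \<and>
      (\<forall>x\<in>S. \<forall>y\<in>S. tbracket c x y \<in> S)}"

definition alg_closed :: "'k::field itself \<Rightarrow> bool" where
  "alg_closed _ \<longleftrightarrow> (\<forall>p :: 'k poly. degree p > 0 \<longrightarrow> (\<exists>x. poly p x = 0))"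

end

theory Submission
  imports Defs
begin


interpretation W: vector_space "wscale :: 'a::field \<Rightarrow> (nat list \<Rightarrow> 'a) \<Rightarrow> _"
  by unfold_locales (auto simp: wscale_def fun_eq_iff algebra_simps)

lemma vs_field: "vector_space ((*) :: 'a::field \<Rightarrow> 'a \<Rightarrow> 'a)"
  by unfold_locales (auto simp: algebra_simps)

lemma wscale_apply: "wscale a f w = a * f w" by (simp add: wscale_def)

lemma sum_fun_apply: "(\<Sum>x\<in>A. f x) w = (\<Sum>x\<in>A. f x w)"
  by (induction A rule: infinite_finite_induct) auto

lemma tm0: "tmult 3 f h [] = f [] * h []" by (simp add: tmult_def)
lemma tm1: "tmult 3 f h [a] = f [] * h [a] + f [a] * h []"
  by (simp add: tmult_def atMost_Suc)
lemma tm2: "tmult 3 f h [a,b] = f [] * h [a,b] + f [a] * h [b] + f [a,b] * h []"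
  by (simp add: tmult_def atMost_Suc numeral_2_eq_2 add_ac)
lemma tm3: "tmult 3 f h [a,b,c] = f [] * h [a,b,c] + f [a] * h [b,c] + f [a,b] * h [c] + f [a,b,c] * h []"
  by (simp add: tmult_def atMost_Suc numeral_3_eq_3 add_ac)
lemma tm4: "length w > 3 \<Longrightarrow> tmult c f h w = 0" if "c = 3" using that by (simp add: tmult_def)

definition d :: "nat list \<Rightarrow> nat list \<Rightarrow> 'a::field" where
  "d u = (\<lambda>w. if w = u then 1 else 0)"

lemma gen_d: "gen i = d [i]" by (simp add: gen_def d_def)

lemma d_apply: "d u w = (if w = u then 1 else 0)" by (simp add: d_def)

lemma tmult_d: "tmult c (d u) (d v) = (if length u + length v \<le> c then d (u @ v) else 0)"
proof (rule ext)
  fix w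
  have eq: "(take i w = u \<and> drop i w = v) \<longleftrightarrow> (w = u @ v \<and> i = length u)" if "i \<le> length w" for i
  proof
    assume "take i w = u \<and> drop i w = v"
    then have "take i w = u" "drop i w = v" by auto
    have "w = take i w @ drop i w" by simp
    also have "\<dots> = u @ v" using \<open>take i w = u\<close> \<open>drop i w = v\<close> by simp
    finally have "w = u @ v" .
    moreover have "length u = i" using \<open>take i w = u\<close> that by auto
    ultimately show "w = u @ v \<and> i = length u" by simp
  next
    assume "w = u @ v \<and> i = length u" then show "take i w = u \<and> drop i w = v" by simp
  qed
  have "(\<Sum>i\<le>length w. d u (take i w) * d v (drop i w)) =
        (\<Sum>i\<le>length w. if i = length u then (if w = u @ v then 1 else 0) else 0)"
    apply (rule sum.cong) apply simp
    subgoal for i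
    proof -
      assume i: "i \<in> {..length w}"
      have "d u (take i w) * d v (drop i w) = (if take i w = u \<and> drop i w = v then 1 else 0)"
        by (simp add: d_def)
      also have "\<dots> = (if w = u @ v \<and> i = length u then 1 else 0)"
        using eq[of i] i by (simp only: atMost_iff)
      also have "\<dots> = (if i = length u then if w = u @ v then 1 else 0 else 0)"
        by (cases "i = length u"; cases "w = u @ v") (simp_all only: simp_thms if_True if_False)
      finally show ?thesis .
    qed
    done
  also have "\<dots> = (if w = u @ v then 1 else 0)" by (auto simp: sum.delta)
  finally have S: "(\<Sum>i\<le>length w. d u (take i w) * d v (drop i w)) = (if w = u @ v then 1 else 0)" .
  show "tmult c (d u) (d v) w = (if length u + length v \<le> c then d (u @ v) else 0) w"
    unfolding tmult_def S by (auto simp: d_def)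
qed

lemma tmult_add_l: "tmult c (f + h) k = tmult c f k + tmult c h k"
  by (auto simp: tmult_def fun_eq_iff sum.distrib distrib_right)
lemma tmult_add_r: "tmult c k (f + h) = tmult c k f + tmult c k h"
  by (auto simp: tmult_def fun_eq_iff sum.distrib distrib_left)
lemma tmult_diff_l: "tmult c (f - h) k = tmult c f k - tmult c h k"
  by (auto simp: tmult_def fun_eq_iff sum_subtractf left_diff_distrib)
lemma tmult_diff_r: "tmult c k (f - h) = tmult c k f - tmult c k h"
  by (auto simp: tmult_def fun_eq_iff sum_subtractf right_diff_distrib)
lemma tmult_scale_l: "tmult c (wscale a f) k = wscale a (tmult c f k)"
  by (auto simp: tmult_def fun_eq_iff sum_distrib_left mult.assoc wscale_apply)
lemma tmult_scale_r: "tmult c k (wscale a f) = wscale a (tmult c k f)"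
  by (auto simp: tmult_def fun_eq_iff sum_distrib_left mult.assoc wscale_apply mult.left_commute)
lemma tmult_zero_l: "tmult c 0 k = 0"
  by (auto simp: tmult_def fun_eq_iff)
lemma tmult_zero_r: "tmult c k 0 = 0"
  by (auto simp: tmult_def fun_eq_iff)

lemmas tmult_lin = tmult_add_l tmult_add_r tmult_diff_l tmult_diff_r tmult_scale_l tmult_scale_r
  tmult_zero_l tmult_zero_r

lemma tb_add_l: "tbracket c (f + h) k = tbracket c f k + tbracket c h k"
  by (simp add: tbracket_def tmult_lin)
lemma tb_add_r: "tbracket c k (f + h) = tbracket c k f + tbracket c k h"
  by (simp add: tbracket_def tmult_lin)
lemma tb_diff_l: "tbracket c (f - h) k = tbracket c f k - tbracket c h k"
  by (simp add: tbracket_def tmult_lin)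
lemma tb_diff_r: "tbracket c k (f - h) = tbracket c k f - tbracket c k h"
  by (simp add: tbracket_def tmult_lin)
lemma tb_scale_l: "tbracket c (wscale a f) k = wscale a (tbracket c f k)"
  by (simp add: tbracket_def tmult_lin fun_eq_iff algebra_simps wscale_apply)
lemma tb_scale_r: "tbracket c k (wscale a f) = wscale a (tbracket c k f)"
  by (simp add: tbracket_def tmult_lin fun_eq_iff algebra_simps wscale_apply)
lemma tb_zero_l: "tbracket c 0 k = 0"
  by (simp add: tbracket_def tmult_lin)
lemma tb_zero_r: "tbracket c k 0 = 0"
  by (simp add: tbracket_def tmult_lin)
lemma tb_anti: "tbracket c x y = - tbracket c y x"
  by (simp add: tbracket_def)
lemma tb_self: "tbracket c x x = 0"
  by (simp add: tbracket_def)

lemmas tb_lin = tb_add_l tb_add_r tb_diff_l tb_diff_r tb_scale_l tb_scale_r tb_zero_l tb_zero_r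

lemma tb_d: "tbracket c (d u) (d v) = (if length u + length v \<le> c then d (u @ v) - d (v @ u) else 0)"
  by (simp add: tbracket_def tmult_d)

lemma tmult_supp:
  assumes "\<And>w. length w \<noteq> m \<Longrightarrow> f w = 0" "\<And>w. length w \<noteq> n \<Longrightarrow> h w = 0" "m + n > c"
  shows "tmult c f h = 0"
proof (rule ext)
  fix w
  have "f (take i w) * h (drop i w) = 0" if "length w \<le> c" for i
    using assms that by (cases "length (take i w) = m"; cases "length (drop i w) = n") auto
  then show "tmult c f h w = 0 w" unfolding tmult_def zero_fun_apply by (simp add: sum.neutral)
qed

lemma tb_supp:
  assumes "\<And>w. length w \<noteq> m \<Longrightarrow> f w = 0" "\<And>w. length w \<noteq> n \<Longrightarrow> h w = 0" "m + n > c"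
  shows "tbracket c f h = 0"
  using tmult_supp[OF assms] tmult_supp[OF assms(2,1)] assms(3) by (simp add: tbracket_def add.commute)



lemma indep_diag:
  fixes e :: "nat list \<Rightarrow> nat list \<Rightarrow> 'a::field"
  assumes fin: "finite H" and off: "\<And>u v. u \<in> H \<Longrightarrow> v \<in> H \<Longrightarrow> u \<noteq> v \<Longrightarrow> e u v = 0"
    and on: "\<And>u. u \<in> H \<Longrightarrow> e u u \<noteq> 0"
  shows "inj_on e H" "W.independent (e ` H)"
proof -
  show inj: "inj_on e H"
  proof (rule inj_onI)
    fix u v assume "u \<in> H" "v \<in> H" "e u = e v"
    then show "u = v" using off[of v u] on[of u] by metis
  qed
  show "W.independent (e ` H)"
  proof (rule W.independent_if_scalars_zero)
    show "finite (e ` H)" using fin by simp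
  next
    fix f x assume S: "(\<Sum>x\<in>e ` H. wscale (f x) x) = 0" and x: "x \<in> e ` H"
    then obtain u where hu: "u \<in> H" "x = e u" by auto
    have "0 = (\<Sum>x\<in>e ` H. wscale (f x) x) u" using S by simp
    also have "\<dots> = (\<Sum>v\<in>H. f (e v) * e v u)"
      by (simp add: sum_fun_apply sum.reindex[OF inj] wscale_apply)
    also have "\<dots> = f (e u) * e u u"
      by (rule sum.remove[OF fin hu(1), THEN trans]) (auto intro!: sum.neutral off hu)
    finally show "f x = 0" using on[OF hu(1)] hu by simp
  qed
qed

lemma coef_diag:
  fixes e :: "nat list \<Rightarrow> nat list \<Rightarrow> 'a::field"
  assumes fin: "finite H" and off: "\<And>u v. u \<in> H \<Longrightarrow> v \<in> H \<Longrightarrow> u \<noteq> v \<Longrightarrow> e u v = 0"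
    and on: "\<And>u. u \<in> H \<Longrightarrow> e u u \<noteq> 0"
    and sub: "H' \<subseteq> H" and y: "y \<in> W.span (e ` H)" and z: "\<And>v. v \<in> H' \<Longrightarrow> y v = 0"
  shows "y \<in> W.span (e ` (H - H'))"
proof -
  have inj: "inj_on e H" by (rule indep_diag(1)[of H e]) (use fin off on in auto)
  obtain c where c: "y = (\<Sum>x\<in>e ` H. wscale (c x) x)"
    using y W.span_finite[of "e ` H"] fin by auto
  have yv: "y v = c (e v) * e v v" if hv: "v \<in> H" for v
  proof -
    have "y v = (\<Sum>u\<in>H. c (e u) * e u v)"
      by (simp add: c sum_fun_apply sum.reindex[OF inj] wscale_apply)
    also have "\<dots> = c (e v) * e v v"
      by (rule sum.remove[OF fin hv, THEN trans]) (auto intro!: sum.neutral off hv)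
    finally show ?thesis .
  qed
  have c0: "c (e v) = 0" if "v \<in> H'" for v
    using yv[of v] z[OF that] on[of v] that sub by auto
  have "y = (\<Sum>u\<in>H. wscale (c (e u)) (e u))"
    by (simp add: c sum.reindex[OF inj])
  also have "\<dots> = (\<Sum>u\<in>H - H'. wscale (c (e u)) (e u))"
    by (rule sum.mono_neutral_right[OF fin]) (auto simp: c0 wscale_def fun_eq_iff)
  also have "\<dots> \<in> W.span (e ` (H - H'))"
    by (intro W.span_sum W.span_scale W.span_base) auto
  finally show ?thesis .
qed



abbreviation br :: "(nat list \<Rightarrow> 'a::field) \<Rightarrow> (nat list \<Rightarrow> 'a) \<Rightarrow> (nat list \<Rightarrow> 'a)" where
  "br \<equiv> tbracket 3"

definition H1 :: "nat \<Rightarrow> nat list set" where "H1 g = {[i] | i. i < g}"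
definition H2 :: "nat \<Rightarrow> nat list set" where "H2 g = {[i,j] | i j. i < j \<and> j < g}"
definition H3a :: "nat \<Rightarrow> nat list set" where
  "H3a g = {[i,j,k] | i j k. i < j \<and> i < k \<and> j < g \<and> k < g}"
definition H3b :: "nat \<Rightarrow> nat list set" where
  "H3b g = {[i,i,k] | i k. i < k \<and> k < g}"
definition H3 :: "nat \<Rightarrow> nat list set" where "H3 g = H3a g \<union> H3b g"
definition HH :: "nat \<Rightarrow> nat list set" where "HH g = H1 g \<union> H2 g \<union> H3 g"

definition ee :: "nat list \<Rightarrow> nat list \<Rightarrow> 'a::field" where
  "ee w = (case w of [i] \<Rightarrow> gen i | [i,j] \<Rightarrow> br (gen i) (gen j)
     | [i,j,k] \<Rightarrow> if i = j then br (gen i) (br (gen i) (gen k)) else br (gen k) (br (gen i) (gen j))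
     | _ \<Rightarrow> 0)"

lemma br_gg: "br (gen i) (gen j) = d [i,j] - d [j,i]"
  by (simp add: gen_d tb_d)
lemma br_ggg: "br (gen k) (br (gen i) (gen j)) = d [k,i,j] - d [i,j,k] - (d [k,j,i] - d [j,i,k])"
  by (simp add: br_gg tb_diff_r gen_d tb_d)

lemma ee1: "ee [i] = d [i]" by (simp add: ee_def gen_d)
lemma ee2: "ee [i,j] = d [i,j] - d [j,i]" by (simp add: ee_def br_gg)
lemma ee3: "ee [i,j,k] = (if i = j then d [i,i,k] - d [i,k,i] - (d [i,k,i] - d [k,i,i])
    else d [k,i,j] - d [i,j,k] - (d [k,j,i] - d [j,i,k]))"
  unfolding ee_def by (simp only: list.case br_ggg)

lemma HH_cases:
  assumes "u \<in> HH g"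
  obtains i where "u = [i]" "i < g"
  | i j where "u = [i,j]" "i < j" "j < g"
  | i j k where "u = [i,j,k]" "i < j" "i < k" "j < g" "k < g"
  | i k where "u = [i,i,k]" "i < k" "k < g"
  using assms unfolding HH_def H1_def H2_def H3_def H3a_def H3b_def by blast

lemma ee_self: "u \<in> HH g \<Longrightarrow> ee u u \<noteq> (0::'a::field_char_0)"
  by (erule HH_cases) (simp_all add: ee1 ee2 ee3 d_apply)

lemma d_supp: "length w \<noteq> length u \<Longrightarrow> d u w = 0"
  by (auto simp: d_apply)

lemma ee_supp: "u \<in> HH g \<Longrightarrow> length w \<noteq> length u \<Longrightarrow> ee u w = (0::'a::field)"
  by (erule HH_cases) (simp_all add: ee1 ee2 ee3 d_supp)

lemma ee_off: "u \<in> HH g \<Longrightarrow> v \<in> HH g \<Longrightarrow> u \<noteq> v \<Longrightarrow> ee u v = (0::'a::field)"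
proof (cases "length v = length u")
  case False
  assume "u \<in> HH g" then show ?thesis using False by (rule ee_supp)
next
  case True
  assume "u \<in> HH g" "v \<in> HH g" "u \<noteq> v"
  then show ?thesis using True
    apply (elim HH_cases)
    apply (simp_all add: ee1 ee2 ee3 d_apply)
    apply auto
    done
qed

lemma finite_HH: "finite (HH g)"
proof -
  have "HH g \<subseteq> {w. length w \<le> 3 \<and> set w \<subseteq> {..<g}}"
    by (auto simp: HH_def H1_def H2_def H3_def H3a_def H3b_def)
  moreover have "finite {w. length w \<le> 3 \<and> set w \<subseteq> {..<g}}"
    using finite_lists_length_le[of "{..<g}" 3] by (simp add: conj_commute)
  ultimately show ?thesis by (rule finite_subset)
qed



lemma ee_1: "ee [i] = gen i" by (simp add: ee_def)
lemma ee_2: "ee [i,j] = br (gen i) (gen j)" by (simp add: ee_def)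
lemma ee_3: "ee [i,j,k] = (if i = j then br (gen i) (br (gen i) (gen k)) else br (gen k) (br (gen i) (gen j)))"
  by (simp add: ee_def)

lemma H_mem:
  "i < g \<Longrightarrow> [i] \<in> HH g"
  "i < j \<Longrightarrow> j < g \<Longrightarrow> [i,j] \<in> HH g"
  "i < j \<Longrightarrow> i < k \<Longrightarrow> j < g \<Longrightarrow> k < g \<Longrightarrow> [i,j,k] \<in> HH g"
  "i < k \<Longrightarrow> k < g \<Longrightarrow> [i,i,k] \<in> HH g"
  by (auto simp: HH_def H1_def H2_def H3_def H3a_def H3b_def)

lemma free_mem_iff: "x \<in> free_nilp g 3 \<longleftrightarrow> (\<forall>S. W.subspace S \<and> gen ` {..<g} \<subseteq> S \<and>
      (\<forall>x\<in>S. \<forall>y\<in>S. br x y \<in> S) \<longrightarrow> x \<in> S)"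
  by (auto simp: free_nilp_def)

lemma gen_in_free: "i < g \<Longrightarrow> gen i \<in> free_nilp g 3"
  by (auto simp: free_mem_iff)

lemma br_in_free: "x \<in> free_nilp g 3 \<Longrightarrow> y \<in> free_nilp g 3 \<Longrightarrow> br x y \<in> free_nilp g 3"
  by (auto simp: free_mem_iff)

lemma subspace_free: "W.subspace (free_nilp g 3 :: (nat list \<Rightarrow> 'a::field) set)"
  unfolding free_nilp_def by (rule W.subspace_Inter) auto

lemma ee_in_free: "u \<in> HH g \<Longrightarrow> ee u \<in> free_nilp g 3"
  by (erule HH_cases) (auto simp: ee_1 ee_2 ee_3 intro!: br_in_free gen_in_free)

lemma jacobi: "k \<noteq> j \<Longrightarrow> k \<noteq> i \<Longrightarrow> br (gen k) (br (gen i) (gen j)) = ee [k,j,i] - (ee [k,i,j] :: _ \<Rightarrow> 'a::field)"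
  by (simp add: ee_3 br_ggg fun_eq_iff algebra_simps)

lemma br_basis_span:
  assumes u: "u \<in> HH g" and v: "v \<in> HH g"
  shows "br (ee u) (ee v) \<in> W.span (ee ` HH g :: (nat list \<Rightarrow> 'a::field) set)"
proof (cases "length u + length v > 3")
  case True
  have "br (ee u) (ee v) = (0 :: nat list \<Rightarrow> 'a)"
    by (rule tb_supp[OF ee_supp[OF u] ee_supp[OF v] True])
  then show ?thesis by (simp add: W.span_zero)
next
  case False
  let ?S = "W.span (ee ` HH g :: (nat list \<Rightarrow> 'a::field) set)"
  have base: "w \<in> HH g \<Longrightarrow> ee w \<in> ?S" for w by (intro W.span_base) auto
  have A: "br (gen k) (br (gen i) (gen j)) \<in> ?S" if "i < j" "j < g" "k < g" for i j k
  proof -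
    consider "i < k" | "k = i" | "k < i" by arith
    then show ?thesis
    proof cases
      case 1 then show ?thesis using base[of "[i,j,k]"] that by (simp add: ee_3 H_mem)
    next
      case 2 then show ?thesis using base[of "[i,i,j]"] that by (simp add: ee_3 H_mem)
    next
      case 3
      then have "br (gen k) (br (gen i) (gen j)) = ee [k,j,i] - (ee [k,i,j] :: _ \<Rightarrow> 'a::field)"
        using that by (intro jacobi) auto
      then show ?thesis using base[of "[k,j,i]"] base[of "[k,i,j]"] that 3
        by (simp add: H_mem W.span_diff)
    qed
  qed
  have B: "br (gen i) (gen j) \<in> ?S" if "i < g" "j < g" for i j
  proof -
    consider "i < j" | "i = j" | "j < i" by arith
    then show ?thesis
    proof cases
      case 1 then show ?thesis using base[of "[i,j]"] that by (simp add: ee_2 H_mem)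
    next
      case 2 then show ?thesis by (simp add: tb_self W.span_zero)
    next
      case 3
      then have "br (gen j) (gen i) \<in> ?S" using base[of "[j,i]"] that by (simp add: ee_2 H_mem)
      then show ?thesis using tb_anti[of 3 "gen i" "gen j"] W.span_neg by metis
    qed
  qed
  from u v False show ?thesis
  proof (elim HH_cases)
    fix i j assume "u = [i]" "i < g" "v = [j]" "j < g"
    then show ?thesis using B by (simp add: ee_1)
  next
    fix k i j assume "u = [k]" "k < g" "v = [i,j]" "i < j" "j < g"
    then show ?thesis using A by (simp add: ee_1 ee_2)
  next
    fix k i j assume "u = [i,j]" "v = [k]" "k < g" "i < j" "j < g"
    then show ?thesis using A[of i j k] tb_anti[of 3 "ee [i,j]" "ee [k]"] W.span_neg
      by (metis ee_1 ee_2)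
  qed simp_all
qed

lemma br_span_closed:
  fixes S :: "(nat list \<Rightarrow> 'a::field) set"
  assumes x: "x \<in> W.span S" and y: "y \<in> W.span S"
    and bas: "\<And>a b. a \<in> S \<Longrightarrow> b \<in> S \<Longrightarrow> br a b \<in> W.span S"
  shows "br x y \<in> W.span S"
proof -
  have R: "br a y \<in> W.span S" if a: "a \<in> S" and y: "y \<in> W.span S" for a y
    using y
  proof (induction rule: W.span_induct)
    case base show ?case
      by (auto simp: W.subspace_def tb_lin tb_zero_r W.span_zero W.span_add W.span_scale)
  next
    case (step b) then show ?case using bas a by auto
  qed
  show ?thesis using x
  proof (induction rule: W.span_induct)
    case base show ?case
      by (auto simp: W.subspace_def tb_lin tb_zero_l W.span_zero W.span_add W.span_scale)
  next
    case (step a) then show ?case using R y by auto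
  qed
qed

lemma free_eq_span: "free_nilp g 3 = W.span (ee ` HH g :: (nat list \<Rightarrow> 'a::field) set)"
proof
  show "W.span (ee ` HH g) \<subseteq> (free_nilp g 3 :: (nat list \<Rightarrow> 'a::field) set)"
    by (rule W.span_minimal) (auto intro: ee_in_free subspace_free)
next
  show "free_nilp g 3 \<subseteq> W.span (ee ` HH g :: (nat list \<Rightarrow> 'a::field) set)"
    unfolding free_nilp_def
  proof (rule Inter_lower, safe)
    fix i assume "i < g"
    then show "gen i \<in> W.span (ee ` HH g :: (nat list \<Rightarrow> 'a::field) set)"
      by (metis W.span_base H_mem(1) ee_1 image_eqI)
  next
    fix x y :: "nat list \<Rightarrow> 'a"
    assume "x \<in> W.span (ee ` HH g)" "y \<in> W.span (ee ` HH g)"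
    then show "br x y \<in> W.span (ee ` HH g)"
      by (rule br_span_closed) (auto intro: br_basis_span)
  qed
qed



abbreviation SP :: "nat list set \<Rightarrow> (nat list \<Rightarrow> 'a::field) set" where
  "SP H \<equiv> W.span (ee ` H)"

lemma list_cases4:
  obtains "w = []" | a where "w = [a]" | a b where "w = [a,b]" | a b c where "w = [a,b,c]"
  | "length w > 3"
proof (cases w)
  case Nil then show ?thesis using that by auto
next
  case (Cons a w1) note c1 = this
  show ?thesis
  proof (cases w1)
    case Nil then show ?thesis using that c1 by auto
  next
    case (Cons b w2) note c2 = this
    show ?thesis
    proof (cases w2)
      case Nil then show ?thesis using that c1 c2 by auto
    next
      case (Cons c w3) note c3 = this
      show ?thesis
      proof (cases w3)
        case Nil then show ?thesis using that c1 c2 c3 by auto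
      next
        case (Cons e w4) then show ?thesis using that c1 c2 c3 by auto
      qed
    qed
  qed
qed

lemma subspace_Collect_lin:
  assumes "\<And>x y. P x \<Longrightarrow> P y \<Longrightarrow> P (x + y)" "\<And>c x. P x \<Longrightarrow> P (wscale c x)" "P 0"
  shows "W.subspace (Collect P)"
  unfolding W.subspace_def mem_Collect_eq using assms by blast

lemma span_prop:
  assumes "y \<in> SP H" "\<And>u. u \<in> H \<Longrightarrow> P (ee u)"
    "\<And>x y. P x \<Longrightarrow> P y \<Longrightarrow> P (x + y)" "\<And>c x. P x \<Longrightarrow> P (wscale c x)" "P 0"
  shows "P y"
  using assms(1)
proof (induction rule: W.span_induct)
  case base show ?case by (rule subspace_Collect_lin[OF assms(3,4,5)])
next
  case (step x) then show ?case using assms(2) by auto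
qed

lemma L_nil: "y \<in> SP (HH g) \<Longrightarrow> y [] = (0::'a::field)"
  by (erule span_prop[where P = "\<lambda>y. y [] = 0"])
     (auto simp: wscale_apply elim!: HH_cases simp: ee1 ee2 ee3 d_apply)

lemma L_anti: "y \<in> SP (HH g) \<Longrightarrow> y [a,b] = - (y [b,a] :: 'a::field)"
proof (erule span_prop[where P = "\<lambda>y. y [a,b] = - y [b,a]"])
  fix u assume "u \<in> HH g"
  then show "ee u [a, b] = - (ee u [b, a] :: 'a)"
    by (cases "length u = 2") (auto elim!: HH_cases simp: ee_supp ee2 d_apply)
qed (auto simp: wscale_apply)

lemma H_len:
  "u \<in> H1 g \<Longrightarrow> length u = 1" "u \<in> H2 g \<Longrightarrow> length u = 2" "u \<in> H3 g \<Longrightarrow> length u = 3"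
  by (auto simp: H1_def H2_def H3_def H3a_def H3b_def)

lemma HH_minus1: "HH g - H1 g = H2 g \<union> H3 g"
  using H_len by (fastforce simp: HH_def)
lemma HH_minus12: "HH g - (H1 g \<union> H2 g) = H3 g"
  using H_len by (fastforce simp: HH_def)
lemma H_sub: "H1 g \<subseteq> HH g" "H2 g \<subseteq> HH g" "H3 g \<subseteq> HH g"
  by (auto simp: HH_def)

lemma coef_HH:
  assumes "H' \<subseteq> HH g" "y \<in> SP (HH g)" "\<And>v. v \<in> H' \<Longrightarrow> y v = (0::'a::field_char_0)"
  shows "y \<in> SP (HH g - H')"
  by (rule coef_diag[OF finite_HH _ _ assms]) (use ee_off ee_self in blast)+

lemma Y1_M: "y \<in> SP (HH g) \<Longrightarrow> (\<And>a. y [a] = (0::'a::field_char_0)) \<Longrightarrow> y \<in> SP (H2 g \<union> H3 g)"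
proof -
  assume "y \<in> SP (HH g)" "\<And>a. y [a] = (0::'a)"
  moreover have "v \<in> H1 g \<Longrightarrow> y v = 0" for v using calculation(2) by (auto simp: H1_def)
  ultimately have "y \<in> SP (HH g - H1 g)" using H_sub by (intro coef_HH) auto
  then show ?thesis by (simp add: HH_minus1)
qed

lemma Y12_Z: "y \<in> SP (HH g) \<Longrightarrow> (\<And>a. y [a] = (0::'a::field_char_0)) \<Longrightarrow> (\<And>a b. y [a,b] = 0)
   \<Longrightarrow> y \<in> SP (H3 g)"
proof -
  assume "y \<in> SP (HH g)" "\<And>a. y [a] = (0::'a)" "\<And>a b. y [a,b] = (0::'a)"
  moreover have "v \<in> H1 g \<union> H2 g \<Longrightarrow> y v = 0" for v
    using calculation(2,3) by (auto simp: H1_def H2_def)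
  ultimately have "y \<in> SP (HH g - (H1 g \<union> H2 g))" using H_sub by (intro coef_HH) auto
  then show ?thesis by (simp add: HH_minus12)
qed

lemma M_Y1: "y \<in> SP (H2 g \<union> H3 g) \<Longrightarrow> y [a] = (0::'a::field)"
proof (erule span_prop[where P = "\<lambda>y. y [a] = 0"])
  fix u assume "u \<in> H2 g \<union> H3 g"
  then have "u \<in> HH g" "length [a] \<noteq> length u" using subsetD[OF H_sub(2)] subsetD[OF H_sub(3)] H_len(2,3)[of u g]
    by auto
  then show "ee u [a] = 0" by (rule ee_supp)
qed (auto simp: wscale_apply)

lemma Z_Y12: "y \<in> SP (H3 g) \<Longrightarrow> y [a] = (0::'a::field) \<and> y [a,b] = 0"
proof (erule span_prop[where P = "\<lambda>y. y [a] = 0 \<and> y [a,b] = 0"])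
  fix u assume "u \<in> H3 g"
  then have "u \<in> HH g" "length [a] \<noteq> length u" "length [a,b] \<noteq> length u"
    using subsetD[OF H_sub(3)] H_len(3)[of u g] by auto
  then show "ee u [a] = 0 \<and> ee u [a,b] = 0" using ee_supp[of u g "[a]"] ee_supp[of u g "[a,b]"] by simp
qed (auto simp: wscale_apply)

lemma SP_mono: "H \<subseteq> H' \<Longrightarrow> SP H \<subseteq> SP H'"
  by (rule W.span_mono, rule image_mono)

lemma br_Y1:
  fixes x y :: "nat list \<Rightarrow> 'a::field"
  assumes "x [] = 0" "y [] = 0" "\<And>a. x [a] = 0" "\<And>a. y [a] = 0"
  shows "br x y = 0"
proof (rule ext)
  fix w show "br x y w = 0 w"
    by (cases w rule: list_cases4) (simp_all add: tbracket_def tm0 tm1 tm2 tm3 tm4 assms)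
qed

lemma br_Y12:
  fixes x y :: "nat list \<Rightarrow> 'a::field"
  assumes "x [] = 0" "y [] = 0" "\<And>a. y [a] = 0" "\<And>a b. y [a,b] = 0"
  shows "br x y = 0"
proof (rule ext)
  fix w show "br x y w = 0 w"
    by (cases w rule: list_cases4) (simp_all add: tbracket_def tm0 tm1 tm2 tm3 tm4 assms)
qed

lemma dim_SP: "H \<subseteq> HH g \<Longrightarrow> W.dim (SP H :: (nat list \<Rightarrow> 'a::field_char_0) set) = card H"
proof -
  assume H: "H \<subseteq> HH g"
  have fin: "finite H" using H finite_HH finite_subset by blast
  have off: "\<And>u v. u \<in> H \<Longrightarrow> v \<in> H \<Longrightarrow> u \<noteq> v \<Longrightarrow> (ee u v :: 'a) = 0"
    using H ee_off by blast
  have on: "\<And>u. u \<in> H \<Longrightarrow> (ee u u :: 'a) \<noteq> 0" using H ee_self by blast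
  have "W.dim (SP H :: (nat list \<Rightarrow> 'a) set) = card (ee ` H :: (nat list \<Rightarrow> 'a) set)"
    by (rule W.dim_span_eq_card_independent) (rule indep_diag(2)[OF fin off on])
  also have "\<dots> = card H" by (rule card_image) (rule indep_diag(1)[OF fin off on])
  finally show ?thesis .
qed

lemma gen_apply: "gen i w = (if w = [i] then 1 else 0)" by (simp add: gen_def)

lemma center_eq:
  assumes g: "g \<ge> 2"
  shows "lie_center (free_nilp g 3) br = (SP (H3 g) :: (nat list \<Rightarrow> 'a::field_char_0) set)"
proof
  show "lie_center (free_nilp g 3) br \<subseteq> (SP (H3 g) :: (nat list \<Rightarrow> 'a) set)"
  proof
    fix z :: "nat list \<Rightarrow> 'a" assume "z \<in> lie_center (free_nilp g 3) br"
    then have zL: "z \<in> SP (HH g)" and zc: "\<And>x. x \<in> SP (HH g) \<Longrightarrow> br x z = 0"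
      by (auto simp: lie_center_def free_eq_span)
    have gi: "gen i \<in> SP (HH g)" if "i < g" for i
      using gen_in_free[OF that] by (simp add: free_eq_span)
    have z1: "z [a] = 0" for a
    proof -
      define i where "i = (if a = 0 then 1 else (0::nat))"
      have i: "i < g" "i \<noteq> a" using g by (auto simp: i_def)
      have "0 = br (gen i) z [i,a]" using zc[OF gi[OF i(1)]] by simp
      also have "\<dots> = z [a]" using i by (simp add: tbracket_def tm2 gen_apply)
      finally show ?thesis by simp
    qed
    have z2: "z [a,b] = 0" for a b
    proof -
      define i where "i = (if b = 0 then 1 else (0::nat))"
      have i: "i < g" "i \<noteq> b" using g by (auto simp: i_def)
      have "0 = br (gen i) z [i,a,b]" using zc[OF gi[OF i(1)]] by simp
      also have "\<dots> = z [a,b]" using i by (simp add: tbracket_def tm3 gen_apply)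
      finally show ?thesis by simp
    qed
    show "z \<in> SP (H3 g)" by (rule Y12_Z[OF zL z1 z2])
  qed
next
  show "(SP (H3 g) :: (nat list \<Rightarrow> 'a) set) \<subseteq> lie_center (free_nilp g 3) br"
  proof
    fix z :: "nat list \<Rightarrow> 'a" assume z: "z \<in> SP (H3 g)"
    have zL: "z \<in> SP (HH g)" using z SP_mono[OF H_sub(3)] by blast
    have "br x z = 0" if "x \<in> SP (HH g)" for x
      by (rule br_Y12) (use that zL z Z_Y12 L_nil in auto)
    then show "z \<in> lie_center (free_nilp g 3) br"
      using zL by (auto simp: lie_center_def free_eq_span)
  qed
qed



lemma fin_H: "finite (H1 g)" "finite (H2 g)" "finite (H3 g)"
  using finite_subset[OF H_sub(1) finite_HH] finite_subset[OF H_sub(2) finite_HH]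
    finite_subset[OF H_sub(3) finite_HH] by auto

lemma H23_disj: "H2 g \<inter> H3 g = {}"
  using H_len(2,3) by fastforce

lemma card_H23: "card (H2 g \<union> H3 g) = card (H2 g) + card (H3 g)"
  by (rule card_Un_disjoint[OF fin_H(2,3) H23_disj])

lemma centralizer:
  fixes a y :: "nat list \<Rightarrow> 'a::field_char_0"
  assumes aL: "a \<in> SP (HH g)" and yL: "y \<in> SP (HH g)" and ap: "a [p] \<noteq> 0" and c: "br a y = 0"
  shows "y \<in> W.span (insert a (ee ` H3 g))"
proof -
  define t where "t = y [p] / a [p]"
  define y' where "y' = y - wscale t a"
  have y'L: "y' \<in> SP (HH g)" unfolding y'_def by (intro W.span_diff W.span_scale aL yL)
  have y'p: "y' [p] = 0" using ap by (simp add: y'_def t_def wscale_apply)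
  have c': "br a y' = 0" by (simp add: y'_def tb_diff_r tb_scale_r tb_self c)
  have an: "a [] = 0" using aL by (rule L_nil)
  have yn: "y' [] = 0" using y'L by (rule L_nil)
  have y1: "y' [v] = 0" for v
  proof -
    have "0 = br a y' [p,v]" using c' by simp
    also have "\<dots> = a [p] * y' [v]" by (simp add: tbracket_def tm2 an yn y'p)
    finally show ?thesis using ap by simp
  qed
  have key: "a [p] * y' [v,w] = y' [p,v] * a [w]" for v w
  proof -
    have "0 = br a y' [p,v,w]" using c' by simp
    also have "\<dots> = a [p] * y' [v,w] - y' [p,v] * a [w]" by (simp add: tbracket_def tm3 an yn y'p y1)
    finally show ?thesis by simp
  qed
  have pp: "y' [p,p] = 0" using L_anti[OF y'L, of p p] by simp
  have pw: "y' [p,w] = 0" for w using key[of p w] pp ap by simp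
  have y2: "y' [v,w] = 0" for v w using key[of v w] pw ap by simp
  have "y' \<in> SP (H3 g)" by (rule Y12_Z[OF y'L y1 y2])
  then have "y' \<in> W.span (insert a (ee ` H3 g))" using W.span_mono[of "ee ` H3 g" "insert a (ee ` H3 g)"] by blast
  moreover have "wscale t a \<in> W.span (insert a (ee ` H3 g))" by (intro W.span_scale W.span_base) simp
  ultimately have "y' + wscale t a \<in> W.span (insert a (ee ` H3 g))" by (rule W.span_add)
  then show ?thesis by (simp add: y'_def)
qed

lemma alpha_eq:
  assumes g: "g \<ge> 2"
  shows "lie_alpha (wscale :: 'a::field_char_0 \<Rightarrow> _) (free_nilp g 3) br = card (H2 g \<union> H3 g)"
  unfolding lie_alpha_def
proof (rule cSup_eq_maximum)
  let ?M = "SP (H2 g \<union> H3 g) :: (nat list \<Rightarrow> 'a) set"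
  have hML: "?M \<subseteq> free_nilp g 3" unfolding free_eq_span by (rule SP_mono) (use H_sub in auto)
  have Mab: "br x y = 0" if "x \<in> ?M" "y \<in> ?M" for x y
  proof -
    have xL: "x \<in> SP (HH g)" and yL: "y \<in> SP (HH g)" using that hML by (auto simp: free_eq_span)
    have "x [] = 0" "y [] = 0" by (rule L_nil[OF xL], rule L_nil[OF yL])
    then show ?thesis using M_Y1[OF that(1)] M_Y1[OF that(2)] by (intro br_Y1) auto
  qed
  have hdim: "W.dim ?M = card (H2 g \<union> H3 g)" by (rule dim_SP[of _ g]) (use H_sub in auto)
  have hprops: "W.subspace ?M \<and> ?M \<subseteq> free_nilp g 3 \<and> (\<forall>x\<in>?M. \<forall>y\<in>?M. br x y \<in> ?M) \<and>
      (\<forall>x\<in>?M. \<forall>y\<in>?M. br x y = 0)"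
    using hML Mab by (auto simp: W.span_zero)
  show "card (H2 g \<union> H3 g) \<in> {W.dim A |A. W.subspace A \<and> A \<subseteq> free_nilp g 3 \<and>
      (\<forall>x\<in>A. \<forall>y\<in>A. br x y \<in> A) \<and> (\<forall>x\<in>A. \<forall>y\<in>A. br x y = (0 :: nat list \<Rightarrow> 'a))}"
    unfolding mem_Collect_eq by (rule exI[where x = "?M"], rule conjI, simp only: hdim, rule hprops)
next
  fix n assume "n \<in> {W.dim A |A. W.subspace A \<and> A \<subseteq> free_nilp g 3 \<and>
      (\<forall>x\<in>A. \<forall>y\<in>A. br x y \<in> A) \<and> (\<forall>x\<in>A. \<forall>y\<in>A. br x y = (0 :: nat list \<Rightarrow> 'a))}"
  then obtain A :: "(nat list \<Rightarrow> 'a) set" where n: "n = W.dim A" and AL0: "A \<subseteq> free_nilp g 3"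
    and ab0: "\<forall>x\<in>A. \<forall>y\<in>A. br x y = 0"
    unfolding mem_Collect_eq by blast
  have AL: "A \<subseteq> SP (HH g)" using AL0 by (simp only: free_eq_span)
  have ab: "\<And>x y. x \<in> A \<Longrightarrow> y \<in> A \<Longrightarrow> br x y = 0" using ab0 by blast
  show "n \<le> card (H2 g \<union> H3 g)"
  proof (cases "\<exists>a\<in>A. \<exists>p. a [p] \<noteq> 0")
    case True
    then obtain a p where a: "a \<in> A" "a [p] \<noteq> 0" by blast
    have "A \<subseteq> W.span (insert a (ee ` H3 g))"
    proof
      fix y assume y: "y \<in> A"
      have "a \<in> SP (HH g)" "y \<in> SP (HH g)" using a(1) y AL by auto
      then show "y \<in> W.span (insert a (ee ` H3 g))"
        using centralizer[of a g y p] a(2) ab[OF a(1) y] by blast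
    qed
    then have "n \<le> card (insert a (ee ` H3 g))" unfolding n
      by (rule W.dim_le_card) (simp add: fin_H)
    also have "\<dots> \<le> card (ee ` H3 g :: (nat list \<Rightarrow> 'a) set) + 1"
      by (simp add: card_insert_if fin_H)
    also have "\<dots> \<le> card (H3 g) + 1" using card_image_le[OF fin_H(3), of ee] by simp
    also have "\<dots> \<le> card (H2 g) + card (H3 g)"
    proof -
      have "[0,1] \<in> H2 g" using g by (auto simp: H2_def)
      then have "card (H2 g) \<noteq> 0" using fin_H(2) by auto
      then show ?thesis by simp
    qed
    finally show ?thesis by (simp add: card_H23)
  next
    case False
    then have "A \<subseteq> SP (H2 g \<union> H3 g)" using AL Y1_M by blast
    then have "n \<le> card (ee ` (H2 g \<union> H3 g) :: (nat list \<Rightarrow> 'a) set)" unfolding n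
      by (rule W.dim_le_card) (simp add: fin_H)
    also have "\<dots> \<le> card (H2 g \<union> H3 g)" by (rule card_image_le) (simp add: fin_H)
    finally show ?thesis .
  qed
qed



lemma dim_mono_fin:
  assumes VU: "V \<subseteq> U" and UF: "U \<subseteq> W.span F" and fin: "finite F"
  shows "W.dim (V :: (nat list \<Rightarrow> 'a::field) set) \<le> W.dim U"
proof -
  obtain A where A: "A \<subseteq> V" "W.independent A" "V \<subseteq> W.span A" "card A = W.dim V"
    by (rule W.basis_exists)
  obtain B where B: "B \<subseteq> U" "W.independent B" "U \<subseteq> W.span B" "card B = W.dim U"
    by (rule W.basis_exists)
  have "finite B" using W.independent_span_bound[OF fin B(2)] B(1) UF by auto
  moreover have "A \<subseteq> W.span B" using A(1) VU B(3) by auto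
  ultimately have "card A \<le> card B" using W.independent_span_bound[OF _ A(2)] by auto
  then show ?thesis using A(4) B(4) by simp
qed

lemma dim_ker1:
  fixes \<phi> :: "(nat list \<Rightarrow> 'a::field) \<Rightarrow> 'a"
  assumes S: "W.subspace S" and SF: "S \<subseteq> W.span F" and fin: "finite F"
    and add: "\<And>x y. \<phi> (x + y) = \<phi> x + \<phi> y" and sc: "\<And>c x. \<phi> (wscale c x) = c * \<phi> x"
  shows "W.dim S \<le> W.dim {y\<in>S. \<phi> y = 0} + 1"
proof (cases "\<forall>y\<in>S. \<phi> y = 0")
  case True
  then have "{y\<in>S. \<phi> y = 0} = S" by auto
  then show ?thesis by simp
next
  case False
  then obtain s0 where s0: "s0 \<in> S" "\<phi> s0 \<noteq> 0" by auto
  let ?K = "{y\<in>S. \<phi> y = 0}"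
  obtain B where B: "B \<subseteq> ?K" "W.independent B" "?K \<subseteq> W.span B" "card B = W.dim ?K"
    by (rule W.basis_exists)
  have finB: "finite B" using W.independent_span_bound[OF fin B(2)] B(1) SF by auto
  have "S \<subseteq> W.span (insert s0 B)"
  proof
    fix y assume y: "y \<in> S"
    define k where "k = \<phi> y / \<phi> s0"
    have diff: "y - wscale k s0 = y + wscale (-1) (wscale k s0)"
      by (simp add: fun_eq_iff wscale_apply)
    have "y - wscale k s0 \<in> S" using y s0 S by (intro W.subspace_diff W.subspace_scale) auto
    moreover have "\<phi> (y - wscale k s0) = 0" unfolding diff add sc using s0 by (simp add: k_def)
    ultimately have "y - wscale k s0 \<in> W.span B" using B(3) by auto
    then show "y \<in> W.span (insert s0 B)" using W.span_breakdown_eq by blast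
  qed
  then have "W.dim S \<le> card (insert s0 B)" by (rule W.dim_le_card) (simp add: finB)
  also have "\<dots> \<le> card B + 1" by (simp add: card_insert_if finB)
  finally show ?thesis using B(4) by simp
qed

lemma dim_kers:
  fixes \<phi> :: "nat \<Rightarrow> (nat list \<Rightarrow> 'a::field) \<Rightarrow> 'a"
  assumes S: "W.subspace S" and SF: "S \<subseteq> W.span F" and fin: "finite F"
    and add: "\<And>i x y. \<phi> i (x + y) = \<phi> i x + \<phi> i y" and sc: "\<And>i c x. \<phi> i (wscale c x) = c * \<phi> i x"
  shows "W.dim S \<le> W.dim {y\<in>S. \<forall>i<n. \<phi> i y = 0} + n"
proof (induction n)
  case 0 then show ?case by simp
next
  case (Suc n)
  let ?Sn = "{y\<in>S. \<forall>i<n. \<phi> i y = 0}"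
  have z: "\<phi> i 0 = 0" for i using sc[of i 0 0] by (simp add: wscale_def zero_fun_def)
  have sub: "W.subspace ?Sn"
    using S unfolding W.subspace_def by (auto simp: add sc z)
  have "W.dim ?Sn \<le> W.dim {y\<in>?Sn. \<phi> n y = 0} + 1"
    by (rule dim_ker1[OF sub _ fin add sc]) (use SF in auto)
  also have "{y\<in>?Sn. \<phi> n y = 0} = {y\<in>S. \<forall>i<Suc n. \<phi> i y = 0}"
    by (auto simp: less_Suc_eq)
  finally show ?case using Suc.IH by simp
qed

lemma lin_props:
  assumes "Vector_Spaces.linear (wscale :: 'a::field \<Rightarrow> _) ((*) :: 'a \<Rightarrow> 'a \<Rightarrow> 'a) l"
  shows "l (x + y) = l x + l y" "l (wscale c x) = c * l x" "l 0 = 0"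
proof -
  have L: "\<forall>x y. l (x + y) = l x + l y" "\<forall>c x. l (wscale c x) = c * l x"
    using assms unfolding Vector_Spaces.linear_iff by blast+
  show "l (x + y) = l x + l y" using L(1) by blast
  show "l (wscale c x) = c * l x" using L(2) by blast
  have "l (wscale 0 0) = 0 * l 0" using L(2) by blast
  then show "l 0 = 0" by (simp add: wscale_def zero_fun_def)
qed

lemma M_abel:
  assumes "x \<in> SP (H2 g \<union> H3 g)" "y \<in> SP (H2 g \<union> H3 g)"
  shows "br x y = (0 :: nat list \<Rightarrow> 'a::field)"
proof -
  have sub: "SP (H2 g \<union> H3 g) \<subseteq> (SP (HH g) :: (nat list \<Rightarrow> 'a) set)"
    by (rule SP_mono) (use H_sub in auto)
  have xL: "x \<in> SP (HH g)" and yL: "y \<in> SP (HH g)" using assms sub by auto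
  have "x [] = 0" "y [] = 0" by (rule L_nil[OF xL], rule L_nil[OF yL])
  then show ?thesis using M_Y1[OF assms(1)] M_Y1[OF assms(2)] by (intro br_Y1) auto
qed

lemma index_lower:
  assumes lin: "Vector_Spaces.linear (wscale :: 'a::field_char_0 \<Rightarrow> _) ((*) :: 'a \<Rightarrow> 'a \<Rightarrow> 'a) l"
  shows "card (H2 g \<union> H3 g) \<le> W.dim (lie_stab (free_nilp g 3) br l :: (nat list \<Rightarrow> 'a) set) + g"
proof -
  let ?M = "SP (H2 g \<union> H3 g) :: (nat list \<Rightarrow> 'a) set"
  let ?K = "{y\<in>?M. \<forall>i<g. l (br (gen i) y) = 0}"
  have sub: "?M \<subseteq> SP (HH g)" by (rule SP_mono) (use H_sub in auto)
  have "card (H2 g \<union> H3 g) = W.dim ?M" by (rule dim_SP[symmetric, of _ g]) (use H_sub in auto)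
  also have "\<dots> \<le> W.dim ?K + g"
    by (rule dim_kers[where F = "ee ` (H2 g \<union> H3 g)"])
       (auto simp: fin_H lin_props[OF lin] tb_add_r tb_scale_r)
  also have "W.dim ?K \<le> W.dim (lie_stab (free_nilp g 3) br l)"
  proof (rule dim_mono_fin[where F = "ee ` HH g"])
    show "?K \<subseteq> lie_stab (free_nilp g 3) br l"
    proof
      fix y assume y: "y \<in> ?K"
      have "l (br x y) = 0" if x: "x \<in> SP (HH g)" for x
        using x
      proof (rule span_prop[where P = "\<lambda>x. l (br x y) = 0"])
        fix u assume u: "u \<in> HH g"
        show "l (br (ee u) y) = 0"
        proof (cases "u \<in> H1 g")
          case True
          then obtain i where "u = [i]" "i < g" by (auto simp: H1_def)
          then show ?thesis using y by (simp add: ee_1)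
        next
          case False
          then have "u \<in> H2 g \<union> H3 g" using u by (auto simp: HH_def)
          then have "ee u \<in> ?M" by (intro W.span_base) auto
          then have "br (ee u) y = 0" using y by (intro M_abel) auto
          then show ?thesis by (simp add: lin_props[OF lin])
        qed
      qed (auto simp: tb_add_l tb_scale_l tb_zero_l lin_props[OF lin])
      then show "y \<in> lie_stab (free_nilp g 3) br l"
        using y sub by (auto simp: lie_stab_def free_eq_span)
    qed
    show "lie_stab (free_nilp g 3) br l \<subseteq> W.span (ee ` HH g)"
      by (auto simp: lie_stab_def free_eq_span)
  qed (simp add: finite_HH)
  finally show ?thesis by simp
qed



definition l0 :: "nat \<Rightarrow> (nat list \<Rightarrow> 'a::field) \<Rightarrow> 'a" where
  "l0 g f = (\<Sum>k\<in>{1..<g}. f [k,0,k]) + f [1,2,0]"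

lemma l0_linear: "Vector_Spaces.linear (wscale :: 'a::field \<Rightarrow> _) ((*) :: 'a \<Rightarrow> 'a \<Rightarrow> 'a) (l0 g)"
  unfolding Vector_Spaces.linear_iff
  by (auto simp: W.vector_space_axioms vs_field l0_def sum.distrib sum_distrib_left wscale_apply
      distrib_left)

lemma br3: "x [] = 0 \<Longrightarrow> y [] = 0 \<Longrightarrow>
  br x y [a,b,c] = x [a] * y [b,c] + x [a,b] * y [c] - y [a] * x [b,c] - y [a,b] * (x [c] :: 'a::field)"
  by (simp add: tbracket_def tm3)

lemma E1:
  fixes y :: "nat list \<Rightarrow> 'a::field"
  assumes yn: "y [] = 0"
  shows "l0 g (br (gen i) y) = (if 1 \<le> i \<and> i < g then y [0,i] - y [i,0] else 0)
     + ((if i = 1 then y [2,0] else 0) - (if i = 0 then y [1,2] else 0))"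
proof -
  have gn: "gen i [] = (0::'a)" by (simp add: gen_apply)
  have "(\<Sum>k\<in>{1..<g}. br (gen i) y [k,0,k]) = (\<Sum>k\<in>{1..<g}. if k = i then y [0,k] - y [k,0] else 0)"
    by (rule sum.cong) (auto simp: br3[of "gen i" y, OF gn yn] gen_apply)
  also have "\<dots> = (if 1 \<le> i \<and> i < g then y [0,i] - y [i,0] else 0)"
    by (simp add: sum.delta')
  finally show ?thesis
    by (simp add: l0_def br3[of "gen i" y, OF gn yn] gen_apply)
qed

lemma E2:
  fixes y :: "nat list \<Rightarrow> 'a::field"
  assumes yn: "y [] = 0" and k: "1 \<le> k"
  shows "l0 g (br (br (gen 0) (gen k)) y) = (if k < g then - 2 * y [k] else 0) + (if k = 2 then y [1] else 0)"
proof -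
  let ?x = "br (gen 0) (gen k) :: nat list \<Rightarrow> 'a"
  have xv: "?x w = (if w = [0,k] then 1 else 0) - (if w = [k,0] then 1 else 0)" for w
    by (simp add: br_gg d_apply)
  have xn: "?x [] = 0" by (simp add: xv)
  have "(\<Sum>k'\<in>{1..<g}. br ?x y [k',0,k']) = (\<Sum>k'\<in>{1..<g}. if k' = k then - 2 * y [k'] else 0)"
    by (rule sum.cong) (use k in \<open>auto simp: br3[of ?x y, OF xn yn] xv\<close>)
  also have "\<dots> = (if k < g then - 2 * y [k] else 0)"
    using k by (simp add: sum.delta')
  finally show ?thesis
    using k by (simp add: l0_def br3[of ?x y, OF xn yn] xv)
qed

lemma E3:
  fixes y :: "nat list \<Rightarrow> 'a::field"
  assumes yn: "y [] = 0"
  shows "l0 g (br (br (gen 1) (gen 2)) y) = y [0]"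
proof -
  define x where "x = (br (gen 1) (gen 2) :: nat list \<Rightarrow> 'a)"
  have xv: "x w = (if w = [1,2] then 1 else 0) - (if w = [2,1] then 1 else 0)" for w
    by (simp add: x_def br_gg d_apply)
  have xn: "x [] = 0" using xv[of "[]"] by simp
  have "(\<Sum>k'\<in>{1..<g}. br x y [k',0,k']) = (\<Sum>k'\<in>{1..<g}. 0)"
    by (rule sum.cong) (auto simp: br3[of x y, OF xn yn] xv)
  then have "l0 g (br x y) = y [0]"
    by (simp add: l0_def br3[of x y, OF xn yn] xv)
  then show ?thesis by (simp add: x_def)
qed



lemma gen_L: "i < g \<Longrightarrow> gen i \<in> SP (HH g)"
  using gen_in_free[of i g] by (simp add: free_eq_span)
lemma br_L: "x \<in> SP (HH g) \<Longrightarrow> y \<in> SP (HH g) \<Longrightarrow> br x y \<in> (SP (HH g) :: (nat list \<Rightarrow> 'a::field) set)"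
  using br_in_free[of x g y] by (simp add: free_eq_span)

definition Hp :: "nat \<Rightarrow> nat list set" where
  "Hp g = H1 g \<union> (\<lambda>k. [0,k]) ` {1..<g} \<union> {[1,2]}"

lemma stab_l0_vanish:
  fixes y :: "nat list \<Rightarrow> 'a::field_char_0"
  assumes g: "g \<ge> 3" and y: "y \<in> lie_stab (free_nilp g 3) br (l0 g)"
  shows "y \<in> SP (HH g)" "\<And>v. v \<in> Hp g \<Longrightarrow> y v = 0"
proof -
  show yL: "y \<in> SP (HH g)" using y by (simp add: lie_stab_def free_eq_span)
  have S: "l0 g (br x y) = 0" if "x \<in> SP (HH g)" for x
    using y that by (simp add: lie_stab_def free_eq_span)
  have yn: "y [] = 0" by (rule L_nil[OF yL])
  have an: "y [a,b] = - y [b,a]" for a b by (rule L_anti[OF yL])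
  have e2: "(if k < g then - 2 * y [k] else 0) + (if k = 2 then y [1] else 0) = 0" if "1 \<le> k" "k < g" for k
    using S[OF br_L[OF gen_L gen_L]] E2[of y k g, OF yn that(1)] that g by simp
  have e1: "(if 1 \<le> i \<and> i < g then y [0,i] - y [i,0] else 0)
     + ((if i = 1 then y [2,0] else 0) - (if i = 0 then y [1,2] else 0)) = 0" if "i < g" for i
    using S[OF gen_L[OF that]] E1[of y g i, OF yn] by simp
  have y0: "y [0] = 0"
    using S[OF br_L[OF gen_L gen_L]] E3[of y g, OF yn] g by simp
  have y1: "y [1] = 0" using e2[of 1] g by simp
  have y2: "y [2] = 0" using e2[of 2] g y1 by simp
  have yk: "y [k] = 0" if "k < g" for k
  proof -
    consider "k = 0" | "k = 1" | "k = 2" | "k \<ge> 3" by arith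
    then show ?thesis
    proof cases
      case 4 then show ?thesis using e2[of k] that by simp
    qed (use y0 y1 y2 in auto)
  qed
  have y12: "y [1,2] = 0" using e1[of 0] g by simp
  have y02: "y [0,2] = 0" using e1[of 2] g an[of 2 0] by simp
  have y01: "y [0,1] = 0" using e1[of 1] g an[of 1 0] an[of 2 0] y02 by simp
  have y0k: "y [0,k] = 0" if "1 \<le> k" "k < g" for k
  proof -
    have "k = 1 \<or> k = 2 \<or> k \<ge> 3" using that by arith
    then consider "k = 1" | "k = 2" | "k \<ge> 3" by blast
    then show ?thesis
    proof cases
      case 3 then show ?thesis using e1[of k] that an[of k 0] by simp
    qed (use y01 y02 in auto)
  qed
  show "y v = 0" if "v \<in> Hp g" for v
    using that yk y0k y12 by (auto simp: Hp_def H1_def)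
qed

lemma card_H1: "card (H1 g) = g"
proof -
  have "H1 g = (\<lambda>i. [i]) ` {..<g}" by (auto simp: H1_def)
  then show ?thesis by (simp add: card_image inj_on_def)
qed

lemma card_Hp: "g \<ge> 3 \<Longrightarrow> card (Hp g) = 2 * g"
proof -
  assume g: "g \<ge> 3"
  have c2: "card ((\<lambda>k. [0,k]) ` {1..<g}) = g - 1" by (simp add: card_image inj_on_def)
  have d1: "H1 g \<inter> (\<lambda>k. [0,k]) ` {1..<g} = {}" by (auto simp: H1_def)
  have "card (H1 g \<union> (\<lambda>k. [0,k]) ` {1..<g}) = g + (g - 1)"
    by (subst card_Un_disjoint) (use d1 c2 card_H1 fin_H in auto)
  moreover have "[1,2] \<notin> H1 g \<union> (\<lambda>k. [0,k]) ` {1..<g}" by (auto simp: H1_def)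
  moreover have "finite (H1 g \<union> (\<lambda>k. [0,k]) ` {1..<g})" using fin_H by auto
  ultimately show ?thesis using g by (simp add: Hp_def)
qed

lemma Hp_sub: "g \<ge> 3 \<Longrightarrow> Hp g \<subseteq> HH g"
  by (auto simp: Hp_def HH_def H2_def)

lemma card_HH: "card (HH g) = card (H1 g) + card (H2 g) + card (H3 g)"
proof -
  have d: "H1 g \<inter> (H2 g \<union> H3 g) = {}" using H_len by fastforce
  show ?thesis unfolding HH_def Un_assoc
    by (subst card_Un_disjoint) (use d fin_H card_H23 in auto)
qed

lemma index_eq:
  assumes g: "g \<ge> 3"
  shows "lie_index (wscale :: 'a::field_char_0 \<Rightarrow> _) (free_nilp g 3) br = card (H2 g \<union> H3 g) - g"
  unfolding lie_index_def
proof (rule cInf_eq_minimum)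
  let ?N = "card (H2 g \<union> H3 g)"
  let ?St = "lie_stab (free_nilp g 3) br (l0 g) :: (nat list \<Rightarrow> 'a) set"
  have "?St \<subseteq> SP (HH g - Hp g)"
  proof
    fix y assume "y \<in> ?St"
    from stab_l0_vanish[OF g this] show "y \<in> SP (HH g - Hp g)"
      by (intro coef_HH Hp_sub g) auto
  qed
  then have "W.dim ?St \<le> card (ee ` (HH g - Hp g) :: (nat list \<Rightarrow> 'a) set)"
    by (rule W.dim_le_card) (simp add: finite_HH)
  also have "\<dots> \<le> card (HH g - Hp g)" by (rule card_image_le) (simp add: finite_HH)
  also have "\<dots> = card (HH g) - card (Hp g)" by (rule card_Diff_subset) (use Hp_sub[OF g] finite_HH finite_subset in auto)
  also have "\<dots> = ?N - g" using card_HH card_H1 card_Hp[OF g] card_H23 by simp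
  finally have up: "W.dim ?St \<le> ?N - g" .
  have low: "?N \<le> W.dim ?St + g" by (rule index_lower[OF l0_linear])
  have eq: "W.dim ?St = ?N - g" using up low by simp
  show "?N - g \<in> {W.dim (lie_stab (free_nilp g 3) br l :: (nat list \<Rightarrow> 'a) set) |l. Vector_Spaces.linear (wscale :: 'a \<Rightarrow> _) (*) l}"
    unfolding mem_Collect_eq by (rule exI[where x = "l0 g"], rule conjI, rule eq[symmetric], rule l0_linear)
next
  fix n assume "n \<in> {W.dim (lie_stab (free_nilp g 3) br l) |l. Vector_Spaces.linear (wscale :: 'a \<Rightarrow> _) (*) l}"
  then obtain l where n: "n = W.dim (lie_stab (free_nilp g 3) br l :: (nat list \<Rightarrow> 'a) set)"
    and lin: "Vector_Spaces.linear (wscale :: 'a \<Rightarrow> _) (*) l" by blast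
  show "card (H2 g \<union> H3 g) - g \<le> n" using index_lower[OF lin, of g] n by simp
qed



lemma sum_id: "2 * (\<Sum>m<g. m) + g = (g::nat)^2"
  by (induction g) (auto simp: power2_eq_square algebra_simps)

lemma sum_sq: "6 * (\<Sum>m<g. m^2) + 3 * g^2 = 2 * g^3 + (g::nat)"
  by (induction g) (auto simp: power2_eq_square power3_eq_cube algebra_simps)

lemma sum_rev_id: "(\<Sum>i<g. g - Suc i) = (\<Sum>m<g. m)"
  using sum.nat_diff_reindex[of "\<lambda>m. m" g] by simp

lemma sum_rev_sq: "(\<Sum>i<g. (g - Suc i)^2) = (\<Sum>m<g. m^2)"
  using sum.nat_diff_reindex[of "\<lambda>m. m^2" g] by simp

lemma card_H2_sum: "card (H2 g) = (\<Sum>m<g. m)"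
proof -
  have "H2 g = (\<Union>i\<in>{..<g}. (\<lambda>j. [i,j]) ` {i<..<g})"
  proof
    show "H2 g \<subseteq> (\<Union>i\<in>{..<g}. (\<lambda>j. [i,j]) ` {i<..<g})"
    proof
      fix w assume "w \<in> H2 g"
      then obtain i j where "w = [i,j]" "i < j" "j < g" by (auto simp: H2_def)
      then show "w \<in> (\<Union>i\<in>{..<g}. (\<lambda>j. [i,j]) ` {i<..<g})" by force
    qed
  qed (auto simp: H2_def)
  also have "card \<dots> = (\<Sum>i<g. card ((\<lambda>j. [i,j]) ` {i<..<g}))"
    by (rule card_UN_disjoint) auto
  also have "\<dots> = (\<Sum>i<g. g - Suc i)"
    by (rule sum.cong) (auto simp: card_image inj_on_def)
  finally show ?thesis by (simp add: sum_rev_id)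
qed

lemma card_H3_sum: "card (H3 g) = (\<Sum>m<g. m^2) + (\<Sum>m<g. m)"
proof -
  have A: "H3a g = (\<Union>i\<in>{..<g}. (\<lambda>(j,k). [i,j,k]) ` ({i<..<g} \<times> {i<..<g}))"
  proof
    show "H3a g \<subseteq> (\<Union>i\<in>{..<g}. (\<lambda>(j,k). [i,j,k]) ` ({i<..<g} \<times> {i<..<g}))"
    proof
      fix w assume "w \<in> H3a g"
      then obtain i j k where "w = [i,j,k]" "i < j" "i < k" "j < g" "k < g" by (auto simp: H3a_def)
      then show "w \<in> (\<Union>i\<in>{..<g}. (\<lambda>(j,k). [i,j,k]) ` ({i<..<g} \<times> {i<..<g}))" by force
    qed
  qed (auto simp: H3a_def)
  have B: "H3b g = (\<Union>i\<in>{..<g}. (\<lambda>k. [i,i,k]) ` {i<..<g})"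
  proof
    show "H3b g \<subseteq> (\<Union>i\<in>{..<g}. (\<lambda>k. [i,i,k]) ` {i<..<g})"
    proof
      fix w assume "w \<in> H3b g"
      then obtain i k where "w = [i,i,k]" "i < k" "k < g" by (auto simp: H3b_def)
      then show "w \<in> (\<Union>i\<in>{..<g}. (\<lambda>k. [i,i,k]) ` {i<..<g})" by force
    qed
  qed (auto simp: H3b_def)
  have cA: "card (H3a g) = (\<Sum>m<g. m^2)"
  proof -
    have "card (H3a g) = (\<Sum>i<g. card ((\<lambda>(j,k). [i,j,k]) ` ({i<..<g} \<times> {i<..<g})))"
      unfolding A by (rule card_UN_disjoint) auto
    also have "\<dots> = (\<Sum>i<g. (g - Suc i)^2)"
      by (rule sum.cong) (auto simp: card_image inj_on_def card_cartesian_product power2_eq_square)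
    finally show ?thesis by (simp add: sum_rev_sq)
  qed
  have cB: "card (H3b g) = (\<Sum>m<g. m)"
  proof -
    have "card (H3b g) = (\<Sum>i<g. card ((\<lambda>k. [i,i,k]) ` {i<..<g}))"
      unfolding B by (rule card_UN_disjoint) auto
    also have "\<dots> = (\<Sum>i<g. g - Suc i)"
      by (rule sum.cong) (auto simp: card_image inj_on_def)
    finally show ?thesis by (simp add: sum_rev_id)
  qed
  have fA: "finite (H3a g)" and fB: "finite (H3b g)"
    using fin_H(3) by (auto simp: H3_def)
  have d: "H3a g \<inter> H3b g = {}" by (auto simp: H3a_def H3b_def)
  show ?thesis unfolding H3_def card_Un_disjoint[OF fA fB d] cA cB ..
qed

lemma card_H2_choose: "card (H2 g) = g choose 2"
proof -
  have "2 * card (H2 g) + g = g^2" using sum_id card_H2_sum by simp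
  then have "2 * card (H2 g) = g * (g - 1)" by (simp add: power2_eq_square algebra_simps diff_mult_distrib2)
  then show ?thesis by (simp add: choose_two)
qed

lemma card_H3_eq: "3 * card (H3 g) + g = g^3"
proof -
  have a: "6 * (\<Sum>m<g. m^2) + 3 * g^2 = 2 * g^3 + g" by (rule sum_sq)
  have b: "2 * (\<Sum>m<g. m) + g = g^2" by (rule sum_id)
  show ?thesis using a b unfolding card_H3_sum by (simp add: algebra_simps)
qed



theorem corollary3p5:
  fixes g :: nat
  assumes "alg_closed TYPE('k::field_char_0)"
    and "g \<ge> 3"
  shows "lie_alpha (wscale :: 'k \<Rightarrow> _) (free_nilp g 3) (tbracket 3)
           = lie_dim (wscale :: 'k \<Rightarrow> _) (lie_center (free_nilp g 3) (tbracket 3)) + (g choose 2)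
    \<and> lie_dim (wscale :: 'k \<Rightarrow> _) (lie_center (free_nilp g 3) (tbracket 3)) + (g choose 2)
           = lie_index (wscale :: 'k \<Rightarrow> _) (free_nilp g 3) (tbracket 3) + g
    \<and> real (lie_index (wscale :: 'k \<Rightarrow> _) (free_nilp g 3) (tbracket 3) + g)
           = (2 * real g ^ 3 + 3 * real g ^ 2 - 5 * real g) / 6"
proof -
  have g: "g \<ge> 3" by fact
  let ?a = "card (H2 g)" and ?b = "card (H3 g)"
  have al: "lie_alpha (wscale :: 'k \<Rightarrow> _) (free_nilp g 3) (tbracket 3) = ?a + ?b"
    using alpha_eq[of g] g card_H23 by simp
  have dz: "lie_dim (wscale :: 'k \<Rightarrow> _) (lie_center (free_nilp g 3) (tbracket 3)) = ?b"
  proof -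
    have "lie_center (free_nilp g 3) (tbracket 3) = (SP (H3 g) :: (nat list \<Rightarrow> 'k) set)"
      by (rule center_eq) (use g in simp)
    then show ?thesis unfolding lie_dim_def by (simp only:) (rule dim_SP[OF H_sub(3)])
  qed
  have ix: "lie_index (wscale :: 'k \<Rightarrow> _) (free_nilp g 3) (tbracket 3) = ?a + ?b - g"
    using index_eq[OF g] card_H23 by simp
  have ch: "g choose 2 = ?a" by (simp add: card_H2_choose)
  have a2: "2 * ?a + g = g^2" using sum_id card_H2_sum by simp
  have b3: "3 * ?b + g = g^3" by (rule card_H3_eq)
  have "g * 3 \<le> g * g" using g by simp
  then have "3 * g \<le> 2 * ?a + g" using a2 by (simp add: power2_eq_square mult.commute)
  then have ag: "g \<le> ?a" by arith
  have ra: "2 * real ?a + real g = real g ^ 2" using arg_cong[OF a2, of real] by simp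
  have rb: "3 * real ?b + real g = real g ^ 3" using arg_cong[OF b3, of real] by simp
  have "real (?a + ?b - g + g) = real ?a + real ?b" using ag by simp
  also have "\<dots> = (2 * real g ^ 3 + 3 * real g ^ 2 - 5 * real g) / 6" using ra rb by (simp add: field_simps)
  finally show ?thesis using al dz ix ch ag by simp
qed


end
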